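(* Let $H\in\mathbb{C}^{N\times N}$ be an orthogonal projector, $|\psi_0\rangle$ a unit vector, $\psi_0=|\psi_0\rangle\langle\psi_0|$, $X_0:=[H,\psi_0]$ and $Y_0:=i[H,X_0]$. For $(x,y)\in\mathbb{R}^2$ set $A:=\operatorname{atan2}(y,x)$, $R:=\sqrt{x^2+y^2}$, $a_1=A+\tfrac{\pi}{2}$, $a_2=A-\tfrac{\pi}{2}$, $b_1=-\tfrac{R}{2}$, $b_2=\tfrac{R}{2}$, and for $t\ge 0$ define \[\gamma(t;x,y)=e^{ia_1H}\,e^{itb_1\psi_0}\,e^{i(a_2-a_1)H}\,e^{itb_2\psi_0}\,e^{-ia_2H}.\] Then: (P1) $\gamma(t;x,y)$ is a product of factors of the form $e^{i\theta H}$ or $e^{i\theta\psi_0}$ with $\theta\in\mathbb{R}$; (P2) $\gamma(0;x,y)=I$; (P3) $\frac{d}{dt}\gamma(t;x,y)\big|_{t=0}=xX_0+yY_0$. Consequently, for $U\in\mathrm{U}(N)$ and $\eta=(xX_0+yY_0)U$, the length-5 product retraction $\mathrm{R}^{(5)}_U(t\eta):=\gamma(t;x,y)\,U$ satisfies $\mathrm{R}^{(5)}_U(0)=U$ and $\frac{d}{dt}\mathrm{R}^{(5)}_U(t\eta)|_{t=0}=\eta$.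
   Context: $\operatorname{atan2}(y,x)$ is the standard two-argument arctangent (for $(x,y)=(0,0)$, $R=0$ and any value of $A$ may be used). $\mathrm{U}(N)$ is the unitary group. *)

theory Defs
  imports "HOL-Analysis.Analysis"
begin

definition cscale :: "complex \<Rightarrow> complex^'n^'m \<Rightarrow> complex^'n^'m" where
  "cscale c A = (\<chi> i j. c * A $ i $ j)"

definition adj :: "complex^'n^'m \<Rightarrow> complex^'m^'n" where
  "adj A = (\<chi> i j. cnj (A $ j $ i))"

primrec matpow :: "complex^'n^'n \<Rightarrow> nat \<Rightarrow> complex^'n^'n" where
  "matpow A 0 = mat 1"
| "matpow A (Suc k) = A ** matpow A k"

definition mexp :: "complex^'n^'n \<Rightarrow> complex^'n^'n" where
  "mexp A = (\<Sum>k. (1 / fact k) *\<^sub>R matpow A k)"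

definition commutator :: "complex^'n^'n \<Rightarrow> complex^'n^'n \<Rightarrow> complex^'n^'n" where
  "commutator A B = A ** B - B ** A"

definition orth_projector :: "complex^'n^'n \<Rightarrow> bool" where
  "orth_projector H \<longleftrightarrow> H ** H = H \<and> adj H = H"

definition unitary :: "complex^'n^'n \<Rightarrow> bool" where
  "unitary U \<longleftrightarrow> U ** adj U = mat 1 \<and> adj U ** U = mat 1"

definition ketbra :: "complex^'n \<Rightarrow> complex^'n^'n" where
  "ketbra v = (\<chi> i j. v $ i * cnj (v $ j))"

text \<open>Standard two-argument arctangent, values in (-pi, pi]; atan2 0 0 = 0.\<close>
definition atan2 :: "real \<Rightarrow> real \<Rightarrow> real" where
  "atan2 y x =
     (if x > 0 then arctan (y / x)
      else if x < 0 \<and> y \<ge> 0 then arctan (y / x) + pi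
      else if x < 0 \<and> y < 0 then arctan (y / x) - pi
      else if y > 0 then pi / 2
      else if y < 0 then - pi / 2
      else 0)"

definition gamma5 :: "complex^'n^'n \<Rightarrow> complex^'n^'n \<Rightarrow> real \<Rightarrow> real \<Rightarrow> real \<Rightarrow> complex^'n^'n" where
  "gamma5 H P t x y =
     (let A = atan2 y x; R = sqrt (x^2 + y^2);
          a1 = A + pi / 2; a2 = A - pi / 2; b1 = - R / 2; b2 = R / 2
      in mexp (cscale (\<i> * complex_of_real a1) H)
         ** mexp (cscale (\<i> * complex_of_real (t * b1)) P)
         ** mexp (cscale (\<i> * complex_of_real (a2 - a1)) H)
         ** mexp (cscale (\<i> * complex_of_real (t * b2)) P)
         ** mexp (cscale (- \<i> * complex_of_real a2) H))"

definition factor_prod :: "complex^'n^'n \<Rightarrow> complex^'n^'n \<Rightarrow> (bool \<times> real) list \<Rightarrow> complex^'n^'n" where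
  "factor_prod H P fs =
     foldr (\<lambda>(b, \<theta>) M. mexp (cscale (\<i> * complex_of_real \<theta>) (if b then H else P)) ** M) fs (mat 1)"

definition retr5 :: "complex^'n^'n \<Rightarrow> complex^'n^'n \<Rightarrow> complex^'n^'n \<Rightarrow> real \<Rightarrow> real \<Rightarrow> real \<Rightarrow> complex^'n^'n" where
  "retr5 H P U t x y = gamma5 H P t x y ** U"

end

theory Submission imports Defs begin


lemma cscale_mult_left: "cscale c A ** B = cscale c (A ** B)"
  by (simp add: vec_eq_iff cscale_def matrix_matrix_mult_def sum_distrib_left mult.assoc)
lemma cscale_mult_right: "A ** cscale c B = cscale c (A ** B)"
  by (simp add: vec_eq_iff cscale_def matrix_matrix_mult_def sum_distrib_left mult.left_commute)
lemma cscale_add_left: "cscale c A + cscale d A = cscale (c + d) A"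
  by (simp add: vec_eq_iff cscale_def distrib_right)
lemma cscale_add_right: "cscale c (A + B) = cscale c A + cscale c B"
  by (simp add: vec_eq_iff cscale_def distrib_left)
lemma cscale_cscale: "cscale c (cscale d A) = cscale (c * d) A"
  by (simp add: vec_eq_iff cscale_def mult.assoc)
lemma cscale_1[simp]: "cscale 1 A = A"
  by (simp add: vec_eq_iff cscale_def)
lemma cscale_0[simp]: "cscale 0 A = 0"
  by (simp add: vec_eq_iff cscale_def)
lemma cscale_zero[simp]: "cscale c 0 = 0"
  by (simp add: vec_eq_iff cscale_def)
lemma sR: "r *\<^sub>R (z::complex) = of_real r * z" by (simp add: scaleR_conv_of_real)
lemma scaleR_cscale: "r *\<^sub>R A = cscale (complex_of_real r) A"
  by (simp add: vec_eq_iff cscale_def sR)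
lemma minus_cscale: "A - B = A + cscale (-1) B"
  by (simp add: vec_eq_iff cscale_def)
lemma matrix_add_rdistrib': "(A + B) ** C = A ** C + B ** (C :: complex^'n^'n)"
  by (simp add: vec_eq_iff matrix_matrix_mult_def distrib_right sum.distrib)

lemma linear_cscale: "linear (\<lambda>c. cscale c (Q::complex^'n^'m))"
  by (rule linearI) (simp_all add: vec_eq_iff cscale_def distrib_right sR mult.assoc)

lemma bl_cscale: "bounded_linear (\<lambda>c. cscale c (Q::complex^'n^'m))"
  using linear_cscale linear_conv_bounded_linear by blast

lemma bilinear_mm: "bilinear (\<lambda>A B. (A::complex^'n^'n) ** (B::complex^'n^'n))"
  unfolding bilinear_def
  by (auto intro!: linearI simp: matrix_add_ldistrib matrix_add_rdistrib' scaleR_cscale cscale_mult_left cscale_mult_right)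

lemma bb_mm: "bounded_bilinear (\<lambda>A B. (A::complex^'n^'n) ** (B::complex^'n^'n))"
  using bilinear_mm bilinear_conv_bounded_bilinear by blast

lemma matpow_idem:
  assumes "Q ** Q = Q"
  shows "matpow (cscale c Q) (Suc k) = cscale (c ^ Suc k) Q"
  by (induction k) (simp_all add: cscale_mult_left cscale_mult_right cscale_cscale assms mult_ac)

lemma mexp_idem:
  assumes "Q ** Q = Q"
  shows "mexp (cscale c Q) = mat 1 + cscale (exp c - 1) Q"
proof -
  have t: "(1 / fact k) *\<^sub>R matpow (cscale c Q) k
     = cscale (c ^ k /\<^sub>R fact k) Q + (if k = 0 then mat 1 - Q else 0)" for k
  proof (cases k)
    case 0 then show ?thesis by simp
  next
    case (Suc m) then show ?thesis
      by (simp add: matpow_idem[OF assms] scaleR_cscale cscale_cscale sR divide_inverse mult_ac del: matpow.simps)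
  qed
  have s1: "(\<lambda>k. cscale (c ^ k /\<^sub>R fact k) Q) sums cscale (exp c) Q"
    using bounded_linear.sums[OF bl_cscale exp_converges] .
  have s2: "(\<lambda>k. if k = 0 then mat 1 - Q else 0) sums (mat 1 - Q)"
    using sums_single[of 0 "\<lambda>_. mat 1 - Q"] by simp
  have "(\<lambda>k. (1 / fact k) *\<^sub>R matpow (cscale c Q) k) sums (cscale (exp c) Q + (mat 1 - Q))"
    unfolding t using sums_add[OF s1 s2] .
  then have "mexp (cscale c Q) = cscale (exp c) Q + (mat 1 - Q)"
    unfolding mexp_def by (rule sums_unique[symmetric])
  also have "\<dots> = mat 1 + cscale (exp c - 1) Q"
    by (simp add: vec_eq_iff cscale_def algebra_simps)
  finally show ?thesis .
qed

lemma mexp_cis: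
  assumes "Q ** Q = Q"
  shows "mexp (cscale (\<i> * complex_of_real th) Q) = mat 1 + cscale (cis th - 1) Q"
  by (simp add: mexp_idem[OF assms] cis_conv_exp)



lemma atan2_polar:
  fixes x y :: real
  defines "R \<equiv> sqrt (x^2 + y^2)"
  shows "R * cos (atan2 y x) = x \<and> R * sin (atan2 y x) = y"
proof -
  have R0: "R > 0" if "x \<noteq> 0" using that unfolding R_def
    by (simp add: add_pos_nonneg)
  show ?thesis
  proof (cases "x = 0")
    case True
    then show ?thesis unfolding R_def atan2_def by (auto simp: real_sqrt_abs)
  next
    case False
    have sq: "sqrt (1 + (y/x)^2) = R / \<bar>x\<bar>"
    proof (rule real_sqrt_unique)
      show "(R / \<bar>x\<bar>)^2 = 1 + (y/x)^2" using False unfolding R_def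
        by (simp add: power_divide field_simps)
      show "0 \<le> R / \<bar>x\<bar>" unfolding R_def by simp
    qed
    have c: "R * cos (arctan (y/x)) = \<bar>x\<bar>" and s: "R * sin (arctan (y/x)) = y * \<bar>x\<bar> / x"
      using False R0 unfolding cos_arctan sin_arctan sq by (simp_all add: field_simps)
    show ?thesis
    proof (cases "x > 0")
      case True then show ?thesis using c s unfolding atan2_def by simp
    next
      case False
      then have "x < 0" using \<open>x \<noteq> 0\<close> by simp
      then show ?thesis using c s unfolding atan2_def by auto
    qed
  qed
qed

lemma atan2_cis:
  "complex_of_real (sqrt (x^2 + y^2)) * cis (atan2 y x) = Complex x y"
  using atan2_polar[of x y] by (simp add: complex_eq_iff)



lemma coeff_id:
  fixes X Y Rc c d :: complex
  assumes "Rc * c = X + \<i> * Y" "Rc * d = X - \<i> * Y"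
  shows "\<i> * (- Rc / 2) * (p + (\<i> * c - 1) * q1 + (- \<i> * d - 1) * q2 + ((\<i> * c - 1) * (- \<i> * d - 1)) * q3)
       + \<i> * (Rc / 2) * (p + (- \<i> * c - 1) * q1 + (\<i> * d - 1) * q2 + ((- \<i> * c - 1) * (\<i> * d - 1)) * q3)
       = X * (q1 - q2) + Y * (\<i> * (q1 - q3 - (q3 - q2)))"
proof -
  have X: "X = (Rc * c + Rc * d) / 2" and Y: "\<i> * Y = (Rc * c - Rc * d) / 2"
    using assms by (simp_all add: field_simps)
  have Y2: "Y = - \<i> * (Rc * c - Rc * d) / 2"
    using arg_cong[OF Y, of "\<lambda>z. - \<i> * z"] by simp
  have ii: "\<i> * (\<i> * z) = - z" for z by (simp add: mult.assoc[symmetric])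
  show ?thesis
    unfolding X Y2 by (simp add: algebra_simps ii, simp add: field_simps)
qed

lemma coeff_mat:
  fixes p q1 q2 q3 :: "complex^'n^'m"
  assumes "Rc * c = X + \<i> * Y" "Rc * d = X - \<i> * Y"
  shows "cscale (\<i> * (- Rc / 2)) (p + cscale (\<i> * c - 1) q1 + cscale (- \<i> * d - 1) q2 + cscale ((\<i> * c - 1) * (- \<i> * d - 1)) q3)
       + cscale (\<i> * (Rc / 2)) (p + cscale (- \<i> * c - 1) q1 + cscale (\<i> * d - 1) q2 + cscale ((- \<i> * c - 1) * (\<i> * d - 1)) q3)
       = cscale X (q1 - q2) + cscale Y (cscale \<i> (q1 - q3 - (q3 - q2)))"
  apply (simp only: vec_eq_iff cscale_def vec_lambda_beta vector_add_component vector_minus_component)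
  apply (intro allI)
  apply (rule coeff_id[OF assms])
  done

lemma mm_sub_l: "A ** (B - C) = A ** B - A ** (C::complex^'n^'n)"
  by (simp add: vec_eq_iff matrix_matrix_mult_def sum_subtractf algebra_simps)
lemma mm_sub_r: "(B - C) ** A = B ** A - C ** (A::complex^'n^'n)"
  by (simp add: vec_eq_iff matrix_matrix_mult_def sum_subtractf algebra_simps)

lemma ketbra_idem:
  assumes "norm v = 1"
  shows "ketbra v ** ketbra v = ketbra v"
proof -
  have "sqrt (\<Sum>k\<in>UNIV. (cmod (v$k))^2) = 1"
    using assms by (simp add: norm_vec_def L2_set_def)
  then have s0: "(\<Sum>k\<in>UNIV. (cmod (v$k))^2) = 1"
    by (metis real_sqrt_eq_1_iff)
  have "(\<Sum>k\<in>UNIV. cnj (v$k) * v$k) = complex_of_real (\<Sum>k\<in>UNIV. (cmod (v$k))^2)"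
    unfolding of_real_sum complex_norm_square by (simp add: mult.commute)
  then have s: "(\<Sum>k\<in>UNIV. cnj (v$k) * v$k) = 1" using s0 by simp
  have "(\<Sum>k\<in>UNIV. (v$i * cnj (v$k)) * (v$k * cnj (v$j))) = v$i * cnj (v$j) * (\<Sum>k\<in>UNIV. cnj (v$k) * v$k)" for i j
    by (simp add: sum_distrib_left mult_ac)
  then show ?thesis using s
    by (simp add: vec_eq_iff ketbra_def matrix_matrix_mult_def)
qed

lemma mexp_cis':
  assumes "Q ** Q = Q"
  shows "mexp (cscale (- \<i> * complex_of_real th) Q) = mat 1 + cscale (cis (- th) - 1) Q"
  using mexp_cis[OF assms, of "-th"] by simp

lemma EE:
  assumes "H ** H = H"
  shows "(mat 1 + cscale (cis a - 1) H) ** (mat 1 + cscale (cis b - 1) H) = mat 1 + cscale (cis (a + b) - 1) (H::complex^'n^'n)"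
proof -
  have "(mat 1 + cscale (cis a - 1) H) ** (mat 1 + cscale (cis b - 1) H)
     = mat 1 + cscale (cis b - 1) H + cscale (cis a - 1) H + cscale ((cis a - 1) * (cis b - 1)) H"
    by (simp add: matrix_add_ldistrib matrix_add_rdistrib' cscale_mult_left cscale_mult_right cscale_cscale assms cscale_add_right mult_ac)
  also have "\<dots> = mat 1 + cscale (cis (a + b) - 1) H"
    by (simp add: vec_eq_iff cscale_def cis_mult[symmetric] algebra_simps)
  finally show ?thesis .
qed

lemma sandwich:
  "(mat 1 + cscale u H) ** (P ** (mat 1 + cscale w H)) =
     P + cscale u (H ** P) + cscale w (P ** H) + cscale (u * w) (H ** (P ** (H::complex^'n^'n)))"
  by (simp add: matrix_add_ldistrib matrix_add_rdistrib' cscale_mult_left cscale_mult_right cscale_cscale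
      matrix_mul_assoc cscale_add_right algebra_simps)



theorem theorem5p3:
  fixes H :: "complex^'n^'n" and v :: "complex^'n" and U :: "complex^'n^'n" and x y :: real
  assumes "orth_projector H"
    and "norm v = 1"
    and "unitary U"
  defines "P \<equiv> ketbra v"
  defines "X0 \<equiv> commutator H P"
  defines "Y0 \<equiv> cscale \<i> (commutator H X0)"
  defines "\<eta> \<equiv> (x *\<^sub>R X0 + y *\<^sub>R Y0) ** U"
  shows "(\<forall>t\<ge>0. \<exists>fs. gamma5 H P t x y = factor_prod H P fs)
    \<and> gamma5 H P 0 x y = mat 1
    \<and> ((\<lambda>t. gamma5 H P t x y) has_derivative (\<lambda>s. s *\<^sub>R (x *\<^sub>R X0 + y *\<^sub>R Y0))) (at 0 within {0..})
    \<and> retr5 H P U 0 x y = U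
    \<and> ((\<lambda>t. retr5 H P U t x y) has_derivative (\<lambda>s. s *\<^sub>R \<eta>)) (at 0 within {0..})"
proof -
  have HH: "H ** H = H" using assms(1) by (simp add: orth_projector_def)
  have PP: "P ** P = P" unfolding P_def using ketbra_idem assms(2) .
  define A where "A = atan2 y x"
  define R where "R = sqrt (x^2 + y^2)"
  define a1 where "a1 = A + pi / 2"
  define a2 where "a2 = A - pi / 2"
  define b1 where "b1 = - R / 2"
  define b2 where "b2 = R / 2"
  define EH where "EH a = mat 1 + cscale (cis a - 1) H" for a
  define EP where "EP a = mat 1 + cscale (cis a - 1) P" for a
  have g: "gamma5 H P t x y = EH a1 ** EP (t*b1) ** EH (a2 - a1) ** EP (t*b2) ** EH (-a2)" for t
    unfolding gamma5_def Let_def mexp_cis[OF HH] mexp_cis[OF PP] mexp_cis'[OF HH]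
      EH_def EP_def a1_def a2_def b1_def b2_def A_def R_def by simp
  have EHE: "EH a ** EH b = EH (a + b)" for a b unfolding EH_def by (rule EE[OF HH])
  have EHE': "EH a ** (EH b ** M) = EH (a + b) ** M" for a b M
    by (simp add: matrix_mul_assoc EHE)
  have EH0: "EH 0 = mat 1" and EP0: "EP 0 = mat 1" by (simp_all add: EH_def EP_def)
  have P1: "\<forall>t\<ge>0. \<exists>fs. gamma5 H P t x y = factor_prod H P fs"
  proof (intro allI impI)
    fix t :: real
    show "\<exists>fs. gamma5 H P t x y = factor_prod H P fs"
      by (rule exI[of _ "[(True, a1), (False, t*b1), (True, a2 - a1), (False, t*b2), (True, -a2)]"])
        (simp add: g factor_prod_def mexp_cis[OF HH] mexp_cis[OF PP] EH_def EP_def matrix_mul_assoc)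
  qed
  have P2: "gamma5 H P 0 x y = mat 1"
    unfolding g by (simp add: EP0 EHE EH0)
  have dEP: "((\<lambda>t. EP (t*b)) has_derivative (\<lambda>h. cscale (complex_of_real h * (\<i> * complex_of_real b)) P)) (at 0 within S)" for b S
  proof -
    have "((\<lambda>t. cis (t*b)) has_derivative (\<lambda>h. (h*b) *\<^sub>R (\<i> * cis (0*b)))) (at 0 within S)"
      by (intro has_derivative_cis derivative_intros)
    then have "((\<lambda>t. cis (t*b) - 1) has_derivative (\<lambda>h. (h*b) *\<^sub>R (\<i> * cis (0*b)) - 0)) (at 0 within S)"
      by (intro derivative_intros)
    then have "((\<lambda>t. mat 1 + cscale (cis (t*b) - 1) P) has_derivative (\<lambda>h. 0 + cscale ((h*b) *\<^sub>R (\<i> * cis (0*b)) - 0) P)) (at 0 within S)"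
      by (intro derivative_intros bounded_linear.has_derivative[OF bl_cscale])
    then show ?thesis unfolding EP_def
      by (rule has_derivative_eq_rhs) (simp add: fun_eq_iff sR mult_ac)
  qed
  define Dm where "Dm = cscale (\<i> * complex_of_real b1) (EH a1 ** (P ** EH (- a1)))
     + cscale (\<i> * complex_of_real b2) (EH a2 ** (P ** EH (- a2)))"
  have dg: "((\<lambda>t. gamma5 H P t x y) has_derivative (\<lambda>s. s *\<^sub>R Dm)) (at 0 within {0..})"
    unfolding g
    apply (rule has_derivative_eq_rhs)
     apply (rule bounded_bilinear.FDERIV[OF bb_mm] has_derivative_const dEP)+
    apply (simp add: fun_eq_iff EP0 matrix_add_ldistrib matrix_add_rdistrib' cscale_mult_left cscale_mult_right
       cscale_cscale matrix_mul_assoc[symmetric] EHE EHE' Dm_def scaleR_cscale cscale_add_right)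
    done
  define c where "c = cis A"
  define d where "d = cis (- A)"
  define Rc where "Rc = complex_of_real R"
  have cp: "cis (pi/2) = \<i>" and cm: "cis (- (pi/2)) = - \<i>" by (simp_all add: complex_eq_iff)
  have "cis a1 = cis A * cis (pi/2)" unfolding a1_def by (simp only: cis_mult)
  then have ca1: "cis a1 = \<i> * c" unfolding c_def cp by simp
  have "cis a2 = cis A * cis (- (pi/2))" unfolding a2_def diff_conv_add_uminus by (simp only: cis_mult)
  then have ca2: "cis a2 = - \<i> * c" unfolding c_def cm by simp
  have "cis (- a1) = cis (- A) * cis (- (pi/2))" unfolding a1_def minus_add_distrib by (simp only: cis_mult)
  then have cma1: "cis (- a1) = - \<i> * d" unfolding d_def cm by simp
  have "cis (- a2) = cis (- A) * cis (pi/2)" unfolding a2_def minus_diff_eq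
    by (simp only: cis_mult diff_conv_add_uminus add.commute)
  then have cma2: "cis (- a2) = \<i> * d" unfolding d_def cp by simp
  have hc: "Rc * c = complex_of_real x + \<i> * complex_of_real y"
    using atan2_cis[of x y] unfolding Rc_def c_def R_def A_def by (simp add: complex_eq_iff)
  have hd: "Rc * d = complex_of_real x - \<i> * complex_of_real y"
    using atan2_polar[of x y] unfolding Rc_def d_def R_def A_def by (simp add: complex_eq_iff)
  have HH': "H ** (H ** M) = H ** M" for M by (simp add: matrix_mul_assoc HH)
  have "Dm = cscale (\<i> * (- Rc / 2)) (P + cscale (\<i> * c - 1) (H ** P) + cscale (- \<i> * d - 1) (P ** H) + cscale ((\<i> * c - 1) * (- \<i> * d - 1)) (H ** (P ** H)))
       + cscale (\<i> * (Rc / 2)) (P + cscale (- \<i> * c - 1) (H ** P) + cscale (\<i> * d - 1) (P ** H) + cscale ((- \<i> * c - 1) * (\<i> * d - 1)) (H ** (P ** H)))"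
    unfolding Dm_def EH_def sandwich ca1 ca2 cma1 cma2 b1_def b2_def Rc_def by simp
  also have "\<dots> = cscale (complex_of_real x) (H ** P - P ** H) + cscale (complex_of_real y) (cscale \<i> (H ** P - H ** (P ** H) - (H ** (P ** H) - P ** H)))"
    by (rule coeff_mat[OF hc hd])
  also have "\<dots> = x *\<^sub>R X0 + y *\<^sub>R Y0"
  proof -
    have 1: "H ** (H ** P - P ** H) = H ** P - H ** (P ** H)"
      by (simp add: mm_sub_l HH')
    have 2: "(H ** P - P ** H) ** H = H ** (P ** H) - P ** H"
      by (simp add: mm_sub_r matrix_mul_assoc[symmetric] HH)
    show ?thesis
      unfolding X0_def Y0_def commutator_def scaleR_cscale 1 2 ..
  qed
  finally have Dm: "Dm = x *\<^sub>R X0 + y *\<^sub>R Y0" .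
  have P3: "((\<lambda>t. gamma5 H P t x y) has_derivative (\<lambda>s. s *\<^sub>R (x *\<^sub>R X0 + y *\<^sub>R Y0))) (at 0 within {0..})"
    using dg unfolding Dm .
  have P4: "retr5 H P U 0 x y = U" unfolding retr5_def P2 by simp
  have P5: "((\<lambda>t. retr5 H P U t x y) has_derivative (\<lambda>s. s *\<^sub>R \<eta>)) (at 0 within {0..})"
    unfolding retr5_def
    apply (rule has_derivative_eq_rhs)
     apply (rule bounded_bilinear.FDERIV[OF bb_mm] has_derivative_const P3)+
    apply (simp add: fun_eq_iff \<eta>_def scaleR_cscale cscale_mult_left)
    done
  show ?thesis using P1 P2 P3 P4 P5 by blast
qed


end
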